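(* Let $\ket T=2^{-1/2}(\ket0+e^{i\pi/4}\ket1)$ and $m\ge1$. Then $$\xi(\ket T^{\otimes m})=(\cos(\pi/8))^{-2m}\quad\text{and}\quad F_{\mathcal S}(\ket T^{\otimes m})=(\cos(\pi/8))^{2m}.$$
   Context: $\mathcal S_m$ is the set of $m$-qubit stabilizer states (states $C\ket{0^m}$ with $C$ a product of Hadamard, phase and CNOT gates). The stabilizer extent is $\xi(\ket\psi)=\min\{\|c\|_1^2:\ket\psi=\sum_ic_i\ket{\phi_i},\ \ket{\phi_i}\in\mathcal S_m\}$ and the stabilizer fidelity is $F_{\mathcal S}(\ket\psi)=\max_{\ket\phi\in\mathcal S_m}|\braket{\phi|\psi}|^2$. *)

theory Defs
  imports "HOL-Analysis.Analysis"
begin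

text \<open>An m-qubit state vector is represented by its amplitudes
  psi :: nat => complex, indexed by computational basis states x < 2^m
  (bit j of x is the value of qubit j); amplitudes at x >= 2^m are 0.\<close>

type_synonym qvec = "nat \<Rightarrow> complex"

definition ket0 :: qvec where
  "ket0 = (\<lambda>x. if x = 0 then 1 else 0)"

definition hadamard :: "nat \<Rightarrow> qvec \<Rightarrow> qvec" where
  "hadamard j psi = (\<lambda>x. (if bit x j then psi (unset_bit j x) - psi x
                           else psi x + psi (set_bit j x)) / complex_of_real (sqrt 2))"

definition phase_gate :: "nat \<Rightarrow> qvec \<Rightarrow> qvec" where
  "phase_gate j psi = (\<lambda>x. if bit x j then \<i> * psi x else psi x)"

definition cnot :: "nat \<Rightarrow> nat \<Rightarrow> qvec \<Rightarrow> qvec" where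
  "cnot c t psi = (\<lambda>x. if bit x c then psi (flip_bit t x) else psi x)"

inductive_set stab_states :: "nat \<Rightarrow> qvec set" for m :: nat where
  base: "ket0 \<in> stab_states m"
| had: "psi \<in> stab_states m \<Longrightarrow> j < m \<Longrightarrow> hadamard j psi \<in> stab_states m"
| phs: "psi \<in> stab_states m \<Longrightarrow> j < m \<Longrightarrow> phase_gate j psi \<in> stab_states m"
| cx: "psi \<in> stab_states m \<Longrightarrow> c < m \<Longrightarrow> t < m \<Longrightarrow> c \<noteq> t \<Longrightarrow> cnot c t psi \<in> stab_states m"

definition inner_q :: "nat \<Rightarrow> qvec \<Rightarrow> qvec \<Rightarrow> complex" where
  "inner_q m phi psi = (\<Sum>x<2^m. cnj (phi x) * psi x)"

definition stab_extent :: "nat \<Rightarrow> qvec \<Rightarrow> real" where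
  "stab_extent m psi = Inf {(\<Sum>i<n. cmod (c i))^2 | (n::nat) (c::nat \<Rightarrow> complex) (phi::nat \<Rightarrow> qvec).
      (\<forall>i<n. phi i \<in> stab_states m) \<and> psi = (\<lambda>x. \<Sum>i<n. c i * phi i x)}"

definition stab_fidelity :: "nat \<Rightarrow> qvec \<Rightarrow> real" where
  "stab_fidelity m psi = Sup {(cmod (inner_q m phi psi))^2 | phi. phi \<in> stab_states m}"

definition T_state :: qvec where
  "T_state = (\<lambda>x. if x = 0 then 1 / complex_of_real (sqrt 2)
                  else if x = 1 then cis (pi/4) / complex_of_real (sqrt 2) else 0)"

text \<open>Tensor power |T>^{\<otimes> m}; the new factor is qubit m (bit m).\<close>
fun T_pow :: "nat \<Rightarrow> qvec" where
  "T_pow 0 = ket0"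
| "T_pow (Suc m) = (\<lambda>x. T_pow m (x mod 2^m) * T_state (x div 2^m))"

end

theory Submission
  imports Defs
begin


lemma lt2_iff: "(a::nat) < 2^m \<longleftrightarrow> (\<forall>i\<ge>m. \<not> bit a i)"
proof -
  have "a < 2^m \<longleftrightarrow> take_bit m a = a" by (simp add: take_bit_nat_eq_self_iff)
  also have "\<dots> \<longleftrightarrow> (\<forall>i. bit (take_bit m a) i = bit a i)" by (simp add: bit_eq_iff)
  also have "\<dots> \<longleftrightarrow> (\<forall>i\<ge>m. \<not> bit a i)" 
    unfolding bit_take_bit_iff by (meson not_le)
  finally show ?thesis .
qed

lemma nat_bits_eq: "(a::nat) < 2^m \<Longrightarrow> b < 2^m \<Longrightarrow> (\<forall>i<m. bit a i = bit b i) \<Longrightarrow> a = b"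
  unfolding lt2_iff by (metis bit_eq_iff not_le)

lemma xor_lt: "(a::nat) < 2^m \<Longrightarrow> b < 2^m \<Longrightarrow> xor a b < 2^m"
  by (simp add: lt2_iff bit_xor_iff)

lemma flip_lt_iff: "j < m \<Longrightarrow> flip_bit j (a::nat) < 2^m \<longleftrightarrow> a < 2^m"
  unfolding lt2_iff bit_flip_bit_iff by auto
lemma set_lt_iff: "j < m \<Longrightarrow> set_bit j (a::nat) < 2^m \<longleftrightarrow> a < 2^m"
  unfolding lt2_iff bit_set_bit_iff by auto
lemma unset_lt_iff: "j < m \<Longrightarrow> unset_bit j (a::nat) < 2^m \<longleftrightarrow> a < 2^m"
  unfolding lt2_iff bit_unset_bit_iff by auto

lemma set_bit_id: "bit (a::nat) j \<Longrightarrow> set_bit j a = a"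
  by (rule bit_eqI) (auto simp: bit_set_bit_iff)
lemma unset_bit_id: "\<not> bit (a::nat) j \<Longrightarrow> unset_bit j a = a"
  by (rule bit_eqI) (auto simp: bit_unset_bit_iff)


lemma sum_prod_bits:
  fixes h :: "nat \<Rightarrow> bool \<Rightarrow> 'a::comm_semiring_1"
  shows "(\<Sum>s<(2::nat)^m. \<Prod>j<m. h j (bit s j)) = (\<Prod>j<m. h j False + h j True)"
proof (induction m arbitrary: h)
  case 0 then show ?case by simp
next
  case (Suc m)
  define A where "A = (\<lambda>x::nat. 2 * x) ` {..<2^m}"
  define B where "B = (\<lambda>x::nat. 2 * x + 1) ` {..<2^m}"
  have split: "{..<(2::nat)^Suc m} = A \<union> B"
  proof (rule set_eqI, rule iffI)
    fix x assume x: "x \<in> {..<(2::nat)^Suc m}"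
    show "x \<in> A \<union> B"
    proof (cases "even x")
      case True then obtain y where "x = 2 * y" by (elim evenE)
      with x show ?thesis by (auto simp: A_def)
    next
      case False then obtain y where "x = 2 * y + 1" by (elim oddE)
      with x show ?thesis by (auto simp: B_def)
    qed
  qed (auto simp: A_def B_def)
  have d: "A \<inter> B = {}" unfolding A_def B_def by auto presburger
  have "(\<Sum>s<(2::nat)^Suc m. \<Prod>j<Suc m. h j (bit s j))
     = (\<Sum>s\<in>A. \<Prod>j<Suc m. h j (bit s j)) + (\<Sum>s\<in>B. \<Prod>j<Suc m. h j (bit s j))"
    unfolding split by (rule sum.union_disjoint) (use d in \<open>auto simp: A_def B_def\<close>)
  also have "\<dots> = (\<Sum>s<(2::nat)^m. \<Prod>j<Suc m. h j (bit (2 * s) j)) + (\<Sum>s<(2::nat)^m. \<Prod>j<Suc m. h j (bit (2 * s + 1) j))"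
    unfolding A_def B_def by (simp add: sum.reindex inj_on_def)
  also have "\<dots> = (\<Sum>s<(2::nat)^m. h 0 False * (\<Prod>j<m. h (Suc j) (bit s j))) + (\<Sum>s<(2::nat)^m. h 0 True * (\<Prod>j<m. h (Suc j) (bit s j)))"
    unfolding prod.lessThan_Suc_shift by (simp add: bit_Suc bit_0)
  also have "\<dots> = (h 0 False + h 0 True) * (\<Prod>j<m. h (Suc j) False + h (Suc j) True)"
    by (simp add: Suc.IH[of "\<lambda>j. h (Suc j)"] sum_distrib_left[symmetric] distrib_right)
  also have "\<dots> = (\<Prod>j<Suc m. h j False + h j True)" unfolding prod.lessThan_Suc_shift ..
  finally show ?case .
qed


definition kq :: "qvec \<Rightarrow> nat \<Rightarrow> nat \<Rightarrow> complex" where "kq \<phi> r c = \<phi> r * cnj (\<phi> c)"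
definition pk :: "nat \<Rightarrow> (nat \<Rightarrow> bool \<Rightarrow> bool \<Rightarrow> complex) \<Rightarrow> nat \<Rightarrow> nat \<Rightarrow> complex" where
  "pk m f r c = (if r < 2^m \<and> c < 2^m then \<Prod>i<m. f i (bit r i) (bit c i) else 0)"

lemma pk_split: "j < m \<Longrightarrow> r < 2^m \<Longrightarrow> c < 2^m \<Longrightarrow>
   pk m f r c = f j (bit r j) (bit c j) * (\<Prod>i\<in>{..<m}-{j}. f i (bit r i) (bit c i))"
  unfolding pk_def by (simp add: prod.remove)

lemma prod_upd_out: "(\<Prod>i\<in>{..<m}-{j}. (f(j:=g)) i (X i) (Y i)) = (\<Prod>i\<in>{..<m}-{j}. f i (X i) (Y i))"
  by (rule prod.cong) auto

lemma pk_scale: assumes j: "j < m" shows "pk m (f(j := (\<lambda>\<rho> \<gamma>. k * g \<rho> \<gamma>))) r c = k * pk m (f(j:=g)) r c"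
proof (cases "r < 2^m \<and> c < 2^m")
  case True
  have "pk m (f(j := (\<lambda>\<rho> \<gamma>. k * g \<rho> \<gamma>))) r c = k * g (bit r j) (bit c j) * (\<Prod>i\<in>{..<m}-{j}. f i (bit r i) (bit c i))"
    using pk_split[OF j, of r c] True by (simp add: prod_upd_out)
  also have "\<dots> = k * pk m (f(j:=g)) r c"
    using pk_split[OF j, of r c "f(j:=g)"] True by (simp add: prod_upd_out)
  finally show ?thesis .
next
  case False then show ?thesis unfolding pk_def if_not_P[OF False] by simp
qed

definition setb :: "nat \<Rightarrow> bool \<Rightarrow> nat \<Rightarrow> nat" where
  "setb j u r = (if u then set_bit j r else unset_bit j r)"

lemma bit_setb: "bit (setb j u r) i = (if i = j then u else bit r i)"
  by (auto simp: setb_def bit_set_bit_iff bit_unset_bit_iff)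

lemma setb_lt: "j < m \<Longrightarrow> setb j u r < 2^m \<longleftrightarrow> r < 2^m"
  by (simp add: setb_def set_lt_iff unset_lt_iff)

definition hs :: "bool \<Rightarrow> bool \<Rightarrow> complex" where "hs \<rho> u = (if \<rho> \<and> u then -1 else 1)"

definition HK :: "nat \<Rightarrow> (nat \<Rightarrow> nat \<Rightarrow> complex) \<Rightarrow> nat \<Rightarrow> nat \<Rightarrow> complex" where
  "HK j K r c = (\<Sum>u\<in>UNIV. \<Sum>u'\<in>UNIV. hs (bit r j) u * hs (bit c j) u' * K (setb j u r) (setb j u' c)) / 2"

definition h1 :: "(bool \<Rightarrow> bool \<Rightarrow> complex) \<Rightarrow> bool \<Rightarrow> bool \<Rightarrow> complex" where
  "h1 g \<rho> \<gamma> = (\<Sum>u\<in>UNIV. \<Sum>u'\<in>UNIV. hs \<rho> u * hs \<gamma> u' * g u u') / 2"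

lemma hadamard_eq: "hadamard j \<phi> r = (\<Sum>u\<in>UNIV. hs (bit r j) u * \<phi> (setb j u r)) / complex_of_real (sqrt 2)"
  by (auto simp: hadamard_def hs_def setb_def UNIV_bool set_bit_id unset_bit_id)

lemma kq_had: "kq (hadamard j \<phi>) = HK j (kq \<phi>)"
proof (intro ext)
  fix r c
  have s2: "complex_of_real (sqrt 2) * complex_of_real (sqrt 2) = 2"
    unfolding of_real_mult[symmetric] by simp
  have hc: "\<And>a b. cnj (hs a b) = hs a b" by (simp add: hs_def)
  let ?A = "\<Sum>u\<in>UNIV. hs (bit r j) u * \<phi> (setb j u r)"
  let ?B = "\<Sum>u\<in>UNIV. hs (bit c j) u * \<phi> (setb j u c)"
  have "kq (hadamard j \<phi>) r c = (?A / complex_of_real (sqrt 2)) * cnj (?B / complex_of_real (sqrt 2))"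
    unfolding kq_def hadamard_eq ..
  also have "\<dots> = (?A * cnj ?B) / (complex_of_real (sqrt 2) * complex_of_real (sqrt 2))"
    by simp
  also have "\<dots> = (?A * cnj ?B) / 2" by (simp only: s2)
  also have "?A * cnj ?B = (\<Sum>u\<in>UNIV. \<Sum>u'\<in>UNIV. hs (bit r j) u * hs (bit c j) u' * kq \<phi> (setb j u r) (setb j u' c))"
    by (simp add: sum_product hc kq_def mult_ac)
  finally show "kq (hadamard j \<phi>) r c = HK j (kq \<phi>) r c" unfolding HK_def .
qed

lemma HK_pk: assumes j: "j < m" shows "HK j (pk m f) = pk m (f(j := h1 (f j)))"
proof (intro ext)
  fix r c
  show "HK j (pk m f) r c = pk m (f(j := h1 (f j))) r c"
  proof (cases "r < 2^m \<and> c < 2^m")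
    case True
    let ?R = "\<Prod>i\<in>{..<m}-{j}. f i (bit r i) (bit c i)"
    have e: "pk m f (setb j u r) (setb j u' c) = f j u u' * ?R" for u u'
    proof -
      have "pk m f (setb j u r) (setb j u' c) = f j u u' * (\<Prod>i\<in>{..<m}-{j}. f i (bit (setb j u r) i) (bit (setb j u' c) i))"
        using pk_split[OF j] True setb_lt[OF j] by (simp add: bit_setb)
      also have "(\<Prod>i\<in>{..<m}-{j}. f i (bit (setb j u r) i) (bit (setb j u' c) i)) = ?R"
        by (rule prod.cong) (auto simp: bit_setb)
      finally show ?thesis .
    qed
    have "pk m (f(j := h1 (f j))) r c = h1 (f j) (bit r j) (bit c j) * ?R"
      using pk_split[OF j, of r c "f(j := h1 (f j))"] True by (simp add: prod_upd_out)
    then show ?thesis unfolding HK_def e h1_def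
      by (simp add: UNIV_bool algebra_simps add_divide_distrib)
  next
    case False
    then show ?thesis unfolding HK_def pk_def using setb_lt[OF j] by auto
  qed
qed


definition sf :: "bool \<Rightarrow> complex" where "sf \<rho> = (if \<rho> then \<i> else 1)"
definition SK :: "nat \<Rightarrow> (nat \<Rightarrow> nat \<Rightarrow> complex) \<Rightarrow> nat \<Rightarrow> nat \<Rightarrow> complex" where
  "SK j K r c = sf (bit r j) * cnj (sf (bit c j)) * K r c"

lemma kq_phs: "kq (phase_gate j \<phi>) = SK j (kq \<phi>)"
  by (intro ext) (simp add: kq_def SK_def phase_gate_def sf_def)

lemma SK_pk: assumes j: "j < m"
  shows "SK j (pk m f) = pk m (f(j := (\<lambda>\<rho> \<gamma>. sf \<rho> * cnj (sf \<gamma>) * f j \<rho> \<gamma>)))"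
proof (intro ext)
  fix r c
  show "SK j (pk m f) r c = pk m (f(j := (\<lambda>\<rho> \<gamma>. sf \<rho> * cnj (sf \<gamma>) * f j \<rho> \<gamma>))) r c"
  proof (cases "r < 2^m \<and> c < 2^m")
    case True
    show ?thesis using pk_split[OF j, of r c f] pk_split[OF j, of r c "f(j := (\<lambda>\<rho> \<gamma>. sf \<rho> * cnj (sf \<gamma>) * f j \<rho> \<gamma>))"] True
      by (simp add: SK_def prod_upd_out)
  next
    case False then show ?thesis unfolding SK_def pk_def if_not_P[OF False] by simp
  qed
qed

definition cg :: "nat \<Rightarrow> nat \<Rightarrow> nat \<Rightarrow> nat" where
  "cg c t r = (if bit r c then flip_bit t r else r)"

lemma bit_cg: "c \<noteq> t \<Longrightarrow> bit (cg c t r) i = (if i = t then bit r t \<noteq> bit r c else bit r i)"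
  by (auto simp: cg_def bit_flip_bit_iff)

lemma cg_lt: "t < m \<Longrightarrow> cg c t r < 2^m \<longleftrightarrow> r < 2^m"
  by (simp add: cg_def flip_lt_iff)

lemma kq_cnot: "kq (cnot c t \<phi>) r d = kq \<phi> (cg c t r) (cg c t d)"
  by (simp add: kq_def cnot_def cg_def)

lemma pk_split2: "c < m \<Longrightarrow> t < m \<Longrightarrow> c \<noteq> t \<Longrightarrow> r < 2^m \<Longrightarrow> d < 2^m \<Longrightarrow>
   pk m f r d = f c (bit r c) (bit d c) * f t (bit r t) (bit d t) * (\<Prod>i\<in>{..<m}-{c}-{t}. f i (bit r i) (bit d i))"
proof -
  assume a: "c < m" "t < m" "c \<noteq> t" "r < 2^m" "d < 2^m"
  have "pk m f r d = f c (bit r c) (bit d c) * (\<Prod>i\<in>{..<m}-{c}. f i (bit r i) (bit d i))"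
    unfolding pk_def using a by (simp add: prod.remove)
  also have "(\<Prod>i\<in>{..<m}-{c}. f i (bit r i) (bit d i)) = f t (bit r t) (bit d t) * (\<Prod>i\<in>{..<m}-{c}-{t}. f i (bit r i) (bit d i))"
    using a by (subst prod.remove[of "{..<m}-{c}" t]) auto
  finally show ?thesis by (simp add: mult.assoc)
qed

lemma CK_pk: assumes c: "c < m" and t: "t < m" and ct: "c \<noteq> t"
  and same: "\<And>i. i \<noteq> c \<Longrightarrow> i \<noteq> t \<Longrightarrow> f' i = f i"
  and key: "\<And>\<rho>c \<gamma>c \<rho>t \<gamma>t. f c \<rho>c \<gamma>c * f t (\<rho>t \<noteq> \<rho>c) (\<gamma>t \<noteq> \<gamma>c) = f' c \<rho>c \<gamma>c * f' t \<rho>t \<gamma>t"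
  shows "pk m f (cg c t r) (cg c t d) = pk m f' r d"
proof (cases "r < 2^m \<and> d < 2^m")
  case True
  have "pk m f (cg c t r) (cg c t d) = f c (bit r c) (bit d c) * f t (bit r t \<noteq> bit r c) (bit d t \<noteq> bit d c) *
      (\<Prod>i\<in>{..<m}-{c}-{t}. f i (bit r i) (bit d i))"
    using pk_split2[OF c t ct, of "cg c t r" "cg c t d" f] True cg_lt[OF t] ct
    by (simp add: bit_cg)
  also have "(\<Prod>i\<in>{..<m}-{c}-{t}. f i (bit r i) (bit d i)) = (\<Prod>i\<in>{..<m}-{c}-{t}. f' i (bit r i) (bit d i))"
    by (rule prod.cong) (auto simp: same)
  also have "f c (bit r c) (bit d c) * f t (bit r t \<noteq> bit r c) (bit d t \<noteq> bit d c) = f' c (bit r c) (bit d c) * f' t (bit r t) (bit d t)"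
    by (rule key)
  finally show ?thesis using pk_split2[OF c t ct, of r d f'] True by simp
next
  case False
  then have nc: "\<not> (cg c t r < 2^m \<and> cg c t d < 2^m)" using cg_lt[OF t] by simp
  show ?thesis unfolding pk_def if_not_P[OF False] if_not_P[OF nc] by simp
qed

definition p1 :: "bool \<Rightarrow> bool \<Rightarrow> bool \<Rightarrow> bool \<Rightarrow> complex" where
  "p1 \<alpha> \<beta> \<rho> \<gamma> = (if \<rho> = (\<gamma> \<noteq> \<alpha>) then (if \<beta> \<and> \<gamma> then -1 else 1) else 0)"

definition pf :: "nat \<times> nat \<Rightarrow> nat \<Rightarrow> bool \<Rightarrow> bool \<Rightarrow> complex" where
  "pf v = (\<lambda>i. p1 (bit (fst v) i) (bit (snd v) i))"

definition pauli :: "nat \<Rightarrow> nat \<times> nat \<Rightarrow> nat \<Rightarrow> nat \<Rightarrow> complex" where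
  "pauli m v = pk m (pf v)"

lemma h1_p1: "h1 (p1 \<alpha> \<beta>) = (\<lambda>\<rho> \<gamma>. (if \<alpha> \<and> \<beta> then -1 else 1) * p1 \<beta> \<alpha> \<rho> \<gamma>)"
  by (intro ext) (cases \<alpha>; cases \<beta>; simp add: h1_def p1_def hs_def UNIV_bool)

lemma s1_p1: "sf \<rho> * cnj (sf \<gamma>) * p1 \<alpha> \<beta> \<rho> \<gamma> = (if \<alpha> then \<i> else 1) * p1 \<alpha> (\<beta> \<noteq> \<alpha>) \<rho> \<gamma>"
  by (cases \<alpha>; cases \<beta>; cases \<rho>; cases \<gamma>; simp add: p1_def sf_def)

lemma c1_p1: "p1 ac bc \<rho>c \<gamma>c * p1 aT bT (\<rho>t \<noteq> \<rho>c) (\<gamma>t \<noteq> \<gamma>c) = p1 ac (bc \<noteq> bT) \<rho>c \<gamma>c * p1 (aT \<noteq> ac) bT \<rho>t \<gamma>t"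
  by (cases ac; cases bc; cases \<rho>c; cases \<gamma>c; cases aT; cases bT; cases \<rho>t; cases \<gamma>t; simp add: p1_def)

lemma c1n: "p1 ac bc \<rho>c \<gamma>c * p1 aT bT (\<rho>t = (\<not> \<rho>c)) (\<gamma>t = (\<not> \<gamma>c)) = p1 ac (bc = (\<not> bT)) \<rho>c \<gamma>c * p1 (aT = (\<not> ac)) bT \<rho>t \<gamma>t"
  using c1_p1 by simp

definition LH :: "nat \<Rightarrow> nat \<times> nat \<Rightarrow> nat \<times> nat" where
  "LH j v = (if bit (fst v) j = bit (snd v) j then v else (flip_bit j (fst v), flip_bit j (snd v)))"
definition sH :: "nat \<Rightarrow> nat \<times> nat \<Rightarrow> complex" where
  "sH j v = (if bit (fst v) j \<and> bit (snd v) j then -1 else 1)"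
definition LS :: "nat \<Rightarrow> nat \<times> nat \<Rightarrow> nat \<times> nat" where
  "LS j v = (fst v, if bit (fst v) j then flip_bit j (snd v) else snd v)"
definition sS :: "nat \<Rightarrow> nat \<times> nat \<Rightarrow> complex" where
  "sS j v = (if bit (fst v) j then \<i> else 1)"
definition LC :: "nat \<Rightarrow> nat \<Rightarrow> nat \<times> nat \<Rightarrow> nat \<times> nat" where
  "LC c t v = (if bit (fst v) c then flip_bit t (fst v) else fst v, if bit (snd v) t then flip_bit c (snd v) else snd v)"

lemma bit_LH: "bit (fst (LH j v)) i = (if i = j then bit (snd v) j else bit (fst v) i)"
              "bit (snd (LH j v)) i = (if i = j then bit (fst v) j else bit (snd v) i)"
  by (auto simp: LH_def bit_flip_bit_iff)
lemma bit_LS: "bit (fst (LS j v)) i = bit (fst v) i"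
              "bit (snd (LS j v)) i = (if i = j then bit (snd v) j \<noteq> bit (fst v) j else bit (snd v) i)"
  by (auto simp: LS_def bit_flip_bit_iff)
lemma bit_LC: "c \<noteq> t \<Longrightarrow> bit (fst (LC c t v)) i = (if i = t then bit (fst v) t \<noteq> bit (fst v) c else bit (fst v) i)"
              "c \<noteq> t \<Longrightarrow> bit (snd (LC c t v)) i = (if i = c then bit (snd v) c \<noteq> bit (snd v) t else bit (snd v) i)"
  by (auto simp: LC_def bit_flip_bit_iff)

lemma HK_pauli: assumes j: "j < m" shows "HK j (pauli m v) = (\<lambda>r c. sH j v * pauli m (LH j v) r c)"
proof -
  have "HK j (pauli m v) = pk m ((pf v)(j := (\<lambda>\<rho> \<gamma>. sH j v * p1 (bit (snd v) j) (bit (fst v) j) \<rho> \<gamma>)))"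
    unfolding pauli_def HK_pk[OF j] by (simp add: pf_def h1_p1 sH_def)
  also have "\<dots> = (\<lambda>r c. sH j v * pk m ((pf v)(j := p1 (bit (snd v) j) (bit (fst v) j))) r c)"
    by (intro ext) (rule pk_scale[OF j])
  also have "(pf v)(j := p1 (bit (snd v) j) (bit (fst v) j)) = pf (LH j v)"
    by (intro ext) (simp add: pf_def bit_LH)
  finally show ?thesis by (simp add: pauli_def)
qed

lemma SK_pauli: assumes j: "j < m" shows "SK j (pauli m v) = (\<lambda>r c. sS j v * pauli m (LS j v) r c)"
proof -
  have "SK j (pauli m v) = pk m ((pf v)(j := (\<lambda>\<rho> \<gamma>. sS j v * p1 (bit (fst v) j) (bit (snd v) j \<noteq> bit (fst v) j) \<rho> \<gamma>)))"
    unfolding pauli_def SK_pk[OF j] by (simp add: pf_def s1_p1 sS_def)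
  also have "\<dots> = (\<lambda>r c. sS j v * pk m ((pf v)(j := p1 (bit (fst v) j) (bit (snd v) j \<noteq> bit (fst v) j))) r c)"
    by (intro ext) (rule pk_scale[OF j])
  also have "(pf v)(j := p1 (bit (fst v) j) (bit (snd v) j \<noteq> bit (fst v) j)) = pf (LS j v)"
    by (intro ext) (simp add: pf_def bit_LS)
  finally show ?thesis by (simp add: pauli_def)
qed

lemma CK_pauli: assumes c: "c < m" and t: "t < m" and ct: "c \<noteq> t"
  shows "pauli m v (cg c t r) (cg c t d) = pauli m (LC c t v) r d"
  unfolding pauli_def
proof (rule CK_pk[OF c t ct])
  show "\<And>i. i \<noteq> c \<Longrightarrow> i \<noteq> t \<Longrightarrow> pf (LC c t v) i = pf v i"
    using ct by (simp add: pf_def bit_LC)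
  show "\<And>\<rho>c \<gamma>c \<rho>t \<gamma>t. pf v c \<rho>c \<gamma>c * pf v t (\<rho>t \<noteq> \<rho>c) (\<gamma>t \<noteq> \<gamma>c) = pf (LC c t v) c \<rho>c \<gamma>c * pf (LC c t v) t \<rho>t \<gamma>t"
    using ct c1n by (simp add: pf_def bit_LC[OF ct])
qed


definition lab :: "nat \<Rightarrow> (nat \<times> nat) set" where "lab m = {v. fst v < 2^m \<and> snd v < 2^m}"
definition xorp :: "nat \<times> nat \<Rightarrow> nat \<times> nat \<Rightarrow> nat \<times> nat" where
  "xorp u v = (xor (fst u) (fst v), xor (snd u) (snd v))"
definition affp :: "(nat \<times> nat) set \<Rightarrow> bool" where
  "affp V = (\<forall>u\<in>V. \<forall>v\<in>V. \<forall>w\<in>V. xorp u (xorp v w) \<in> V)"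

definition sinv :: "nat \<Rightarrow> qvec \<Rightarrow> bool" where
  "sinv m \<phi> = (\<exists>V s. V \<subseteq> lab m \<and> card V = 2^m \<and> affp V \<and> (\<forall>v\<in>V. cmod (s v) \<le> 1) \<and>
      kq \<phi> = (\<lambda>r c. (\<Sum>v\<in>V. s v * pauli m v r c) / 2^m))"

lemma finite_lab: "finite (lab m)"
proof -
  have "lab m \<subseteq> {..<2^m} \<times> {..<2^m}" by (auto simp: lab_def)
  then show ?thesis by (rule finite_subset) auto
qed

lemma pair_bits_eq: "(\<And>i. bit (fst u) i = bit (fst v) i) \<Longrightarrow> (\<And>i. bit (snd u) i = bit (snd v) i) \<Longrightarrow> u = (v::nat\<times>nat)"
  by (simp add: prod_eq_iff bit_eq_iff)

lemma inv_step:
  assumes I: "sinv m \<phi>"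
    and invol: "\<And>v. L (L v) = v"
    and labL: "\<And>v. v \<in> lab m \<Longrightarrow> L v \<in> lab m"
    and lin: "\<And>u v w. L (xorp u (xorp v w)) = xorp (L u) (xorp (L v) (L w))"
    and sig: "\<And>v. cmod (\<sigma> v) = 1"
    and K: "\<And>V s. kq \<phi> = (\<lambda>r c. (\<Sum>v\<in>V. s v * pauli m v r c) / 2^m) \<Longrightarrow>
              kq \<phi>' = (\<lambda>r c. (\<Sum>v\<in>V. s v * (\<sigma> v * pauli m (L v) r c)) / 2^m)"
  shows "sinv m \<phi>'"
proof -
  obtain V s where V: "V \<subseteq> lab m" "card V = 2^m" "affp V" "\<forall>v\<in>V. cmod (s v) \<le> 1"
    and kv: "kq \<phi> = (\<lambda>r c. (\<Sum>v\<in>V. s v * pauli m v r c) / 2^m)"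
    using I unfolding sinv_def by blast
  have injL: "inj_on L A" for A by (metis inj_onI invol)
  define s' where "s' w = s (L w) * \<sigma> (L w)" for w
  have "kq \<phi>' = (\<lambda>r c. (\<Sum>v\<in>V. s v * (\<sigma> v * pauli m (L v) r c)) / 2^m)" by (rule K[OF kv])
  also have "\<dots> = (\<lambda>r c. (\<Sum>w\<in>L ` V. s' w * pauli m w r c) / 2^m)"
    by (intro ext) (simp add: sum.reindex[OF injL] s'_def invol mult_ac)
  finally have k': "kq \<phi>' = (\<lambda>r c. (\<Sum>w\<in>L ` V. s' w * pauli m w r c) / 2^m)" .
  have "L ` V \<subseteq> lab m" using V(1) labL by auto
  moreover have "card (L ` V) = 2^m" using V(2) card_image[OF injL] by simp
  moreover have "affp (L ` V)"
    unfolding affp_def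
  proof (intro ballI)
    fix x y z assume "x \<in> L ` V" "y \<in> L ` V" "z \<in> L ` V"
    then obtain u v w where "u \<in> V" "v \<in> V" "w \<in> V" "x = L u" "y = L v" "z = L w" by blast
    then show "xorp x (xorp y z) \<in> L ` V" using V(3) unfolding affp_def by (metis image_eqI lin)
  qed
  moreover have "\<forall>w\<in>L ` V. cmod (s' w) \<le> 1"
    using V(4) by (auto simp: s'_def norm_mult sig invol)
  ultimately show ?thesis unfolding sinv_def using k' by blast
qed

lemma swap3: "(\<Sum>u\<in>A. \<Sum>u'\<in>B. (\<Sum>v\<in>V. f u u' v)) = (\<Sum>v\<in>V. \<Sum>u\<in>A. \<Sum>u'\<in>B. f u u' v)"
proof -
  have "(\<Sum>u\<in>A. \<Sum>u'\<in>B. (\<Sum>v\<in>V. f u u' v)) = (\<Sum>u\<in>A. \<Sum>v\<in>V. \<Sum>u'\<in>B. f u u' v)"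
    by (rule sum.cong[OF refl], rule sum.swap)
  also have "\<dots> = (\<Sum>v\<in>V. \<Sum>u\<in>A. \<Sum>u'\<in>B. f u u' v)" by (rule sum.swap)
  finally show ?thesis .
qed

lemma HK_sum: "HK j (\<lambda>r c. \<Sum>v\<in>V. s v * K v r c) = (\<lambda>r c. \<Sum>v\<in>V. s v * HK j (K v) r c)"
proof (intro ext)
  fix r c
  have "HK j (\<lambda>r c. \<Sum>v\<in>V. s v * K v r c) r c = (\<Sum>u\<in>UNIV. \<Sum>u'\<in>UNIV. \<Sum>v\<in>V. hs (bit r j) u * hs (bit c j) u' * (s v * K v (setb j u r) (setb j u' c))) / 2"
    by (simp only: HK_def sum_distrib_left)
  also have "\<dots> = (\<Sum>v\<in>V. \<Sum>u\<in>UNIV. \<Sum>u'\<in>UNIV. hs (bit r j) u * hs (bit c j) u' * (s v * K v (setb j u r) (setb j u' c))) / 2"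
    by (subst swap3) (rule refl)
  also have "\<dots> = (\<Sum>v\<in>V. (\<Sum>u\<in>UNIV. \<Sum>u'\<in>UNIV. hs (bit r j) u * hs (bit c j) u' * (s v * K v (setb j u r) (setb j u' c))) / 2)"
    by (simp only: sum_divide_distrib)
  also have "\<dots> = (\<Sum>v\<in>V. s v * HK j (K v) r c)"
  proof (rule sum.cong[OF refl])
    fix v
    have "(\<Sum>u\<in>UNIV. \<Sum>u'\<in>UNIV. hs (bit r j) u * hs (bit c j) u' * (s v * K v (setb j u r) (setb j u' c)))
        = s v * (\<Sum>u\<in>UNIV. \<Sum>u'\<in>UNIV. hs (bit r j) u * hs (bit c j) u' * K v (setb j u r) (setb j u' c))"
      by (simp only: sum_distrib_left mult.left_commute)
    then show "(\<Sum>u\<in>UNIV. \<Sum>u'\<in>UNIV. hs (bit r j) u * hs (bit c j) u' * (s v * K v (setb j u r) (setb j u' c))) / 2 = s v * HK j (K v) r c"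
      unfolding HK_def by simp
  qed
  finally show "HK j (\<lambda>r c. \<Sum>v\<in>V. s v * K v r c) r c = (\<Sum>v\<in>V. s v * HK j (K v) r c)" .
qed

lemma HK_div: "HK j (\<lambda>r c. K r c / D) = (\<lambda>r c. HK j K r c / D)"
  by (intro ext) (simp add: HK_def UNIV_bool algebra_simps add_divide_distrib)

lemma HK_lin: "HK j (\<lambda>r c. (\<Sum>v\<in>V. s v * K v r c) / D) = (\<lambda>r c. (\<Sum>v\<in>V. s v * HK j (K v) r c) / D)"
  using HK_div[of j "\<lambda>r c. \<Sum>v\<in>V. s v * K v r c" D] HK_sum[where j=j and V=V and s=s and K=K] by simp

lemma SK_lin: "SK j (\<lambda>r c. (\<Sum>v\<in>V. s v * K v r c) / D) = (\<lambda>r c. (\<Sum>v\<in>V. s v * SK j (K v) r c) / D)"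
  by (intro ext) (simp add: SK_def sum_distrib_left sum_divide_distrib algebra_simps)

lemma LH_1: "LH j (LH j v) = v" by (rule pair_bits_eq) (auto simp: bit_LH)
lemma LH_2: "v \<in> lab m \<Longrightarrow> j < m \<Longrightarrow> LH j v \<in> lab m" by (auto simp: lab_def lt2_iff bit_LH)
lemma LH_3: "LH j (xorp u (xorp v w)) = xorp (LH j u) (xorp (LH j v) (LH j w))"
  by (rule pair_bits_eq) (auto simp: bit_LH xorp_def bit_xor_iff)
lemma LS_1: "LS j (LS j v) = v" by (rule pair_bits_eq) (auto simp: bit_LS)
lemma LS_2: "v \<in> lab m \<Longrightarrow> j < m \<Longrightarrow> LS j v \<in> lab m" by (auto simp: lab_def lt2_iff bit_LS)
lemma LS_3: "LS j (xorp u (xorp v w)) = xorp (LS j u) (xorp (LS j v) (LS j w))"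
  by (rule pair_bits_eq) (auto simp: bit_LS xorp_def bit_xor_iff)
lemma LC_1: "c \<noteq> t \<Longrightarrow> LC c t (LC c t v) = v" by (rule pair_bits_eq) (auto simp: bit_LC)
lemma LC_2: "c \<noteq> t \<Longrightarrow> v \<in> lab m \<Longrightarrow> c < m \<Longrightarrow> t < m \<Longrightarrow> LC c t v \<in> lab m"
  by (auto simp: lab_def lt2_iff bit_LC)
lemma LC_3: "c \<noteq> t \<Longrightarrow> LC c t (xorp u (xorp v w)) = xorp (LC c t u) (xorp (LC c t v) (LC c t w))"
  by (rule pair_bits_eq) (auto simp: bit_LC xorp_def bit_xor_iff)


lemma zero_bits: "(r::nat) < 2^m \<Longrightarrow> (\<forall>i<m. \<not> bit r i) \<longleftrightarrow> r = 0"
  using nat_bits_eq[of r m 0] by auto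

lemma inv_ket0: "sinv m ket0"
proof -
  define V where "V = (\<lambda>b. (0::nat, b)) ` {..<(2::nat)^m}"
  have inj: "inj_on (\<lambda>b. (0::nat, b)) A" for A by (simp add: inj_on_def)
  have "V \<subseteq> lab m" by (auto simp: V_def lab_def)
  moreover have "card V = 2^m" unfolding V_def by (simp add: card_image[OF inj])
  moreover have "affp V" unfolding affp_def V_def xorp_def by (auto intro: xor_lt)
  moreover have "kq ket0 = (\<lambda>r c. (\<Sum>v\<in>V. 1 * pauli m v r c) / 2^m)"
  proof (intro ext)
    fix r c
    show "kq ket0 r c = (\<Sum>v\<in>V. 1 * pauli m v r c) / 2^m"
    proof (cases "r < 2^m \<and> c < 2^m")
      case True
      have "(\<Sum>v\<in>V. 1 * pauli m v r c) = (\<Sum>b<(2::nat)^m. \<Prod>i<m. p1 False (bit b i) (bit r i) (bit c i))"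
        unfolding V_def using True by (simp add: sum.reindex[OF inj] pauli_def pk_def pf_def)
      also have "\<dots> = (\<Prod>i<m. p1 False False (bit r i) (bit c i) + p1 False True (bit r i) (bit c i))"
        by (rule sum_prod_bits)
      also have "\<dots> = (\<Prod>i<m. (if \<not> bit r i \<and> \<not> bit c i then 2 else 0))"
        by (rule prod.cong) (auto simp: p1_def)
      also have "\<dots> = (if r = 0 \<and> c = 0 then 2^m else 0)"
      proof (cases "r = 0 \<and> c = 0")
        case True then show ?thesis by simp
      next
        case False
        then obtain i where "i < m" "bit r i \<or> bit c i" using zero_bits[of r m] zero_bits[of c m] \<open>r < 2^m \<and> c < 2^m\<close> by blast
        then show ?thesis using False by (intro trans[OF prod_zero]) auto
      qed
      finally show ?thesis by (auto simp: kq_def ket0_def)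
    next
      case False
      have pos: "(0::nat) < 2^m" by simp
      have "r \<noteq> 0 \<or> c \<noteq> 0"
      proof (rule ccontr)
        assume "\<not> (r \<noteq> 0 \<or> c \<noteq> 0)"
        then have "r = 0" "c = 0" by auto
        with pos False show False by simp
      qed
      then have z1: "kq ket0 r c = 0" by (auto simp: kq_def ket0_def)
      have z2: "\<And>v. pauli m v r c = 0" unfolding pauli_def pk_def if_not_P[OF False] by simp
      show ?thesis using z1 z2 by simp
    qed
  qed
  ultimately show ?thesis unfolding sinv_def by (intro exI[of _ V] exI[of _ "\<lambda>_. 1"]) auto
qed

lemma stab_inv: "\<phi> \<in> stab_states m \<Longrightarrow> sinv m \<phi>"
proof (induction rule: stab_states.induct)
  case base then show ?case by (rule inv_ket0)
next
  case (had \<psi> j)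
  show ?case
  proof (rule inv_step[OF had.IH, where L="LH j" and \<sigma>="sH j"])
    show "\<And>v. LH j (LH j v) = v" by (rule LH_1)
    show "\<And>v. v \<in> lab m \<Longrightarrow> LH j v \<in> lab m" using LH_2 had.hyps(2) by blast
    show "\<And>u v w. LH j (xorp u (xorp v w)) = xorp (LH j u) (xorp (LH j v) (LH j w))" by (rule LH_3)
    show "\<And>v. cmod (sH j v) = 1" by (simp add: sH_def)
    fix V s assume "kq \<psi> = (\<lambda>r c. (\<Sum>v\<in>V. s v * pauli m v r c) / 2 ^ m)"
    then show "kq (hadamard j \<psi>) = (\<lambda>r c. (\<Sum>v\<in>V. s v * (sH j v * pauli m (LH j v) r c)) / 2 ^ m)"
      by (simp add: kq_had HK_lin HK_pauli[OF had.hyps(2)])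
  qed
next
  case (phs \<psi> j)
  show ?case
  proof (rule inv_step[OF phs.IH, where L="LS j" and \<sigma>="sS j"])
    show "\<And>v. LS j (LS j v) = v" by (rule LS_1)
    show "\<And>v. v \<in> lab m \<Longrightarrow> LS j v \<in> lab m" using LS_2 phs.hyps(2) by blast
    show "\<And>u v w. LS j (xorp u (xorp v w)) = xorp (LS j u) (xorp (LS j v) (LS j w))" by (rule LS_3)
    show "\<And>v. cmod (sS j v) = 1" by (simp add: sS_def)
    fix V s assume "kq \<psi> = (\<lambda>r c. (\<Sum>v\<in>V. s v * pauli m v r c) / 2 ^ m)"
    then show "kq (phase_gate j \<psi>) = (\<lambda>r c. (\<Sum>v\<in>V. s v * (sS j v * pauli m (LS j v) r c)) / 2 ^ m)"
      by (simp add: kq_phs SK_lin SK_pauli[OF phs.hyps(2)])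
  qed
next
  case (cx \<psi> c t)
  show ?case
  proof (rule inv_step[OF cx.IH, where L="LC c t" and \<sigma>="\<lambda>_. 1"])
    show "\<And>v. LC c t (LC c t v) = v" using LC_1 cx.hyps(4) by blast
    show "\<And>v. v \<in> lab m \<Longrightarrow> LC c t v \<in> lab m" using LC_2 cx.hyps by blast
    show "\<And>u v w. LC c t (xorp u (xorp v w)) = xorp (LC c t u) (xorp (LC c t v) (LC c t w))" using LC_3 cx.hyps(4) by blast
    show "\<And>v. cmod ((\<lambda>_. 1::complex) v) = 1" by simp
    fix V s assume k: "kq \<psi> = (\<lambda>r c. (\<Sum>v\<in>V. s v * pauli m v r c) / 2 ^ m)"
    show "kq (cnot c t \<psi>) = (\<lambda>r d. (\<Sum>v\<in>V. s v * ((\<lambda>_. 1) v * pauli m (LC c t v) r d)) / 2 ^ m)"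
      by (intro ext) (simp add: kq_cnot k CK_pauli[OF cx.hyps(2,3,4)])
  qed
qed


definition aa :: real where "aa = sqrt 2 / 2"
definition wl :: "bool \<Rightarrow> bool \<Rightarrow> real" where "wl \<alpha> \<beta> = (if \<alpha> then aa else if \<beta> then 0 else 1)"
definition Wt :: "nat \<Rightarrow> nat \<times> nat \<Rightarrow> real" where "Wt m v = (\<Prod>i<m. wl (bit (fst v) i) (bit (snd v) i))"

lemma sqrt2_le2: "sqrt 2 \<le> (2::real)"
proof -
  have "sqrt 2 \<le> sqrt (4::real)" by (rule real_sqrt_le_mono) simp
  also have "sqrt (4::real) = 2" by (simp add: real_sqrt_eq_iff[symmetric] power2_eq_square)
  finally show ?thesis .
qed

lemma aa_pos: "0 \<le> aa" "aa \<le> 1" using sqrt2_le2 by (auto simp: aa_def)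

lemma wl_nonneg: "0 \<le> wl x y" using aa_pos by (simp add: wl_def)
lemma wl_le: "wl x y \<le> 1" using aa_pos by (simp add: wl_def)
lemma wl_ne: "(x, y) \<noteq> (False, False) \<Longrightarrow> wl x y \<le> aa" using aa_pos by (auto simp: wl_def)

definition xl :: "bool \<times> bool \<Rightarrow> bool \<times> bool \<Rightarrow> bool \<times> bool" where
  "xl x y = (fst x \<noteq> fst y, snd x \<noteq> snd y)"

lemma xl3: "xl x (xl y z) = x \<longleftrightarrow> y = z" "xl x (xl y z) = y \<longleftrightarrow> x = z" "xl x (xl y z) = z \<longleftrightarrow> x = y"
  by (auto simp: xl_def prod_eq_iff)

lemma letters:
  fixes T :: "(bool \<times> bool) set"
  assumes ne: "T \<noteq> {}" and cl: "\<forall>x\<in>T. \<forall>y\<in>T. \<forall>z\<in>T. xl x (xl y z) \<in> T"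
  shows "\<exists>j. card T = 2^j \<and> (\<Sum>L\<in>T. wl (fst L) (snd L)) \<le> (1 + aa)^j"
proof -
  have U4: "(UNIV :: (bool \<times> bool) set) = {(False,False),(False,True),(True,False),(True,True)}"
    by auto
  have cu: "card (UNIV :: (bool \<times> bool) set) = 4" unfolding U4 by simp
  have Tsub: "T \<subseteq> {(False,False),(False,True),(True,False),(True,True)}"
    using subset_UNIV[of T] unfolding U4 .
  have fin: "finite T" by (rule finite_subset[OF Tsub]) simp
  have "card T \<le> card {(False,False),(False,True),(True,False),(True,True)}" by (rule card_mono[OF _ Tsub]) simp
  then have "card T \<le> 4" by simp
  moreover have "card T \<noteq> 0" using ne fin card_0_eq by blast
  moreover have "card T \<noteq> 3"
  proof
    assume "card T = 3"
    then obtain x y z where T: "T = {x, y, z}" "x \<noteq> y" "y \<noteq> z" "x \<noteq> z" unfolding card_3_iff by blast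
    then have "xl x (xl y z) \<in> {x, y, z}" using cl by blast
    then show False using T xl3[of x y z] by blast
  qed
  ultimately have "card T = 1 \<or> card T = 2 \<or> card T = 4" by linarith
  then show ?thesis
  proof (elim disjE)
    assume "card T = 1"
    then obtain x where "T = {x}" by (elim card_1_singletonE)
    then show ?thesis by (intro exI[of _ 0]) (simp add: wl_le)
  next
    assume "card T = 2"
    then obtain x y where T: "T = {x, y}" "x \<noteq> y" unfolding card_2_iff by blast
    have "wl (fst x) (snd x) + wl (fst y) (snd y) \<le> 1 + aa"
    proof (cases "x = (False, False)")
      case True then have "y \<noteq> (False, False)" using T by auto
      then show ?thesis using wl_le[of "fst x" "snd x"] wl_ne[of "fst y" "snd y"] by simp
    next
      case False
      then show ?thesis using wl_le[of "fst y" "snd y"] wl_ne[of "fst x" "snd x"] by simp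
    qed
    then show ?thesis using T by (intro exI[of _ 1]) simp
  next
    assume "card T = 4"
    then have "T = UNIV" using card_subset_eq[of UNIV T] cu Tsub U4 by simp
    then have "(\<Sum>L\<in>T. wl (fst L) (snd L)) = (\<Sum>L\<in>{(False,False),(False,True),(True,False),(True,True)}. wl (fst L) (snd L))"
      unfolding U4 by simp
    also have "\<dots> = 1 + 2 * aa" by (simp add: wl_def)
    finally have "(\<Sum>L\<in>T. wl (fst L) (snd L)) = 1 + 2 * aa" .
    also have "\<dots> \<le> (1 + aa)^2" by (simp add: power2_eq_square algebra_simps)
    finally show ?thesis using \<open>card T = 4\<close> by (intro exI[of _ 2]) simp
  qed
qed

lemma xor_cancel: "xor (a::nat) c = xor b c \<Longrightarrow> a = b"
proof (rule bit_eqI)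
  fix n assume "xor a c = xor b c"
  then have "bit (xor a c) n = bit (xor b c) n" by simp
  then show "bit a n = bit b n" by (auto simp: bit_xor_iff)
qed

lemma weight:
  "V \<subseteq> lab m \<Longrightarrow> affp V \<Longrightarrow> V \<noteq> {} \<Longrightarrow> \<exists>k. card V = 2^k \<and> (\<Sum>v\<in>V. Wt m v) \<le> (1 + aa)^k"
proof (induction m arbitrary: V)
  case 0
  then have "V \<subseteq> {(0,0)}" by (auto simp: lab_def prod_eq_iff)
  with 0 have "V = {(0,0)}" by blast
  then show ?case by (intro exI[of _ 0]) (simp add: Wt_def)
next
  case (Suc m)
  define letter where "letter v = (bit (fst v) m, bit (snd v) m)" for v :: "nat \<times> nat"
  define tk where "tk v = (take_bit m (fst v), take_bit m (snd v))" for v :: "nat \<times> nat"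
  define VL where "VL L = {v\<in>V. letter v = L}" for L
  define FL where "FL L = tk ` VL L" for L
  define T where "T = letter ` V"
  have finV: "finite V" using Suc.prems(1) finite_lab finite_subset by blast
  have bit_tk: "bit (fst (tk v)) i = (i < m \<and> bit (fst v) i)" "bit (snd (tk v)) i = (i < m \<and> bit (snd v) i)" for v i
    by (auto simp: tk_def bit_take_bit_iff)
  have inj: "inj_on tk (VL L)" for L
  proof (rule inj_onI)
    fix u v assume u: "u \<in> VL L" and v: "v \<in> VL L" and e: "tk u = tk v"
    have ul: "u \<in> lab (Suc m)" "v \<in> lab (Suc m)" using u v Suc.prems(1) by (auto simp: VL_def)
    have lu: "letter u = letter v" using u v by (simp add: VL_def)
    show "u = v"
    proof (rule pair_bits_eq)
      fix i
      show "bit (fst u) i = bit (fst v) i"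
      proof (cases "i < m")
        case True then show ?thesis using arg_cong[OF e, of "\<lambda>x. bit (fst x) i"] by (simp add: bit_tk)
      next
        case False
        show ?thesis
        proof (cases "i = m")
          case True then show ?thesis using lu by (simp add: letter_def)
        next
          case False
          then have si: "Suc m \<le> i" using \<open>\<not> i < m\<close> by simp
          have "fst u < 2^Suc m" "fst v < 2^Suc m" using ul unfolding lab_def by blast+
          then show ?thesis using si unfolding lt2_iff by blast
        qed
      qed
      show "bit (snd u) i = bit (snd v) i"
      proof (cases "i < m")
        case True then show ?thesis using arg_cong[OF e, of "\<lambda>x. bit (snd x) i"] by (simp add: bit_tk)
      next
        case False
        show ?thesis
        proof (cases "i = m")
          case True then show ?thesis using lu by (simp add: letter_def)
        next
          case False
          then have si: "Suc m \<le> i" using \<open>\<not> i < m\<close> by simp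
          have "snd u < 2^Suc m" "snd v < 2^Suc m" using ul unfolding lab_def by blast+
          then show ?thesis using si unfolding lt2_iff by blast
        qed
      qed
    qed
  qed
  have tk_xor: "tk (xorp u (xorp v w)) = xorp (tk u) (xorp (tk v) (tk w))" for u v w
    by (simp add: tk_def xorp_def take_bit_xor)
  have letter_xor: "letter (xorp u (xorp v w)) = xl (letter u) (xl (letter v) (letter w))" for u v w
    by (simp add: letter_def xorp_def xl_def bit_xor_iff)
  have xl_same: "xl L (xl L L') = L'" "xl L (xl L' L) = L'" "xl L (xl L L) = L" for L L'
    by (auto simp: xl_def prod_eq_iff)
  have FL_lab: "FL L \<subseteq> lab m" for L
    by (auto simp: FL_def tk_def lab_def take_bit_nat_less_exp)
  have FL_aff: "affp (FL L)" for L
    unfolding affp_def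
  proof (intro ballI)
    fix x y z assume "x \<in> FL L" "y \<in> FL L" "z \<in> FL L"
    then obtain u v w where uvw: "u \<in> VL L" "v \<in> VL L" "w \<in> VL L" "x = tk u" "y = tk v" "z = tk w"
      by (auto simp: FL_def)
    then have "xorp u (xorp v w) \<in> V" using Suc.prems(2) unfolding affp_def VL_def by blast
    moreover have "letter (xorp u (xorp v w)) = L" using uvw by (simp add: VL_def letter_xor xl_same)
    ultimately have "xorp u (xorp v w) \<in> VL L" by (simp add: VL_def)
    then show "xorp x (xorp y z) \<in> FL L" using uvw tk_xor unfolding FL_def by (metis image_eqI)
  qed
  have Wt_split: "Wt (Suc m) v = Wt m (tk v) * wl (fst (letter v)) (snd (letter v))" for v
  proof -
    have "(\<Prod>i<m. wl (bit (fst v) i) (bit (snd v) i)) = Wt m (tk v)"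
      unfolding Wt_def by (rule prod.cong) (auto simp: bit_tk)
    then show ?thesis by (simp add: Wt_def letter_def)
  qed
  have sum_split: "(\<Sum>v\<in>V. g v) = (\<Sum>L\<in>T. \<Sum>v\<in>VL L. g v)" for g :: "nat \<times> nat \<Rightarrow> real"
    unfolding T_def VL_def by (rule sum.image_gen[OF finV])
  have sumW: "(\<Sum>v\<in>V. Wt (Suc m) v) = (\<Sum>L\<in>T. wl (fst L) (snd L) * (\<Sum>u\<in>FL L. Wt m u))"
  proof -
    have "(\<Sum>v\<in>V. Wt (Suc m) v) = (\<Sum>L\<in>T. \<Sum>v\<in>VL L. Wt (Suc m) v)" by (rule sum_split)
    also have "\<dots> = (\<Sum>L\<in>T. wl (fst L) (snd L) * (\<Sum>u\<in>FL L. Wt m u))"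
    proof (rule sum.cong[OF refl])
      fix L
      have "(\<Sum>v\<in>VL L. Wt (Suc m) v) = (\<Sum>v\<in>VL L. wl (fst L) (snd L) * Wt m (tk v))"
        by (rule sum.cong[OF refl]) (simp add: Wt_split VL_def)
      also have "\<dots> = wl (fst L) (snd L) * (\<Sum>u\<in>FL L. Wt m u)"
        unfolding FL_def sum.reindex[OF inj] by (simp add: sum_distrib_left)
      finally show "(\<Sum>v\<in>VL L. Wt (Suc m) v) = wl (fst L) (snd L) * (\<Sum>u\<in>FL L. Wt m u)" .
    qed
    finally show ?thesis .
  qed
  have cardV: "card V = (\<Sum>L\<in>T. card (FL L))"
  proof -
    have "card V = (\<Sum>v\<in>V. 1::nat)" by simp
    also have "\<dots> = (\<Sum>L\<in>T. \<Sum>v\<in>VL L. 1::nat)" unfolding T_def VL_def by (rule sum.image_gen[OF finV])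
    also have "\<dots> = (\<Sum>L\<in>T. card (FL L))" unfolding FL_def by (simp add: card_image[OF inj])
    finally show ?thesis .
  qed
  have finFL: "finite (FL L)" for L using FL_lab finite_lab finite_subset by blast
  have card_le: "card (FL L) \<le> card (FL L')" if LT: "L \<in> T" and LT': "L' \<in> T" for L L'
  proof -
    obtain v0 where v0: "v0 \<in> VL L" using LT unfolding T_def VL_def by blast
    obtain v1 where v1: "v1 \<in> VL L'" using LT' unfolding T_def VL_def by blast
    define sh where "sh u = xorp u (tk (xorp v0 (xorp v1 (0,0))))" for u
    have "inj_on sh (FL L)"
      by (rule inj_onI) (auto simp: sh_def xorp_def prod_eq_iff dest: xor_cancel)
    moreover have "sh ` FL L \<subseteq> FL L'"
    proof
      fix y assume "y \<in> sh ` FL L"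
      then obtain v where v: "v \<in> VL L" "y = sh (tk v)" by (auto simp: FL_def)
      have "xorp v (xorp v0 v1) \<in> V" using Suc.prems(2) v(1) v0 v1 unfolding affp_def VL_def by blast
      moreover have "letter (xorp v (xorp v0 v1)) = L'" using v v0 v1 by (simp add: VL_def letter_xor xl_same)
      ultimately have "xorp v (xorp v0 v1) \<in> VL L'" by (simp add: VL_def)
      moreover have "tk (xorp v (xorp v0 v1)) = y"
        using v(2) by (simp add: sh_def tk_def xorp_def take_bit_xor)
      ultimately show "y \<in> FL L'" unfolding FL_def by blast
    qed
    ultimately show ?thesis using card_inj_on_le finFL by blast
  qed
  have Tne: "T \<noteq> {}" using Suc.prems(3) by (simp add: T_def)
  then obtain L0 where L0: "L0 \<in> T" by blast
  have VL0: "VL L0 \<noteq> {}" using L0 unfolding T_def VL_def by blast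
  have FL0: "FL L0 \<noteq> {}" using VL0 by (simp add: FL_def)
  obtain k0 where k0: "card (FL L0) = 2^k0" using Suc.IH[OF FL_lab FL_aff FL0] by blast
  have cards: "card (FL L) = 2^k0" if "L \<in> T" for L using card_le[OF that L0] card_le[OF L0 that] k0 by simp
  have bound: "(\<Sum>u\<in>FL L. Wt m u) \<le> (1 + aa)^k0" if "L \<in> T" for L
  proof -
    have "VL L \<noteq> {}" using that unfolding T_def VL_def by blast
    then have "FL L \<noteq> {}" by (simp add: FL_def)
    then obtain k where "card (FL L) = 2^k" "(\<Sum>u\<in>FL L. Wt m u) \<le> (1 + aa)^k"
      using Suc.IH[OF FL_lab FL_aff] by blast
    moreover have "k = k0" using cards[OF that] \<open>card (FL L) = 2^k\<close> by simp
    ultimately show ?thesis by simp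
  qed
  have Tcl: "\<forall>x\<in>T. \<forall>y\<in>T. \<forall>z\<in>T. xl x (xl y z) \<in> T"
  proof (intro ballI)
    fix x y z assume "x \<in> T" "y \<in> T" "z \<in> T"
    then obtain u v w where "u \<in> V" "v \<in> V" "w \<in> V" "x = letter u" "y = letter v" "z = letter w"
      by (auto simp: T_def)
    then show "xl x (xl y z) \<in> T" using Suc.prems(2) unfolding affp_def T_def
      by (metis image_eqI letter_xor)
  qed
  obtain j where j: "card T = 2^j" "(\<Sum>L\<in>T. wl (fst L) (snd L)) \<le> (1 + aa)^j"
    using letters[OF Tne Tcl] by blast
  have "card V = 2^(j + k0)" using cardV cards j(1) by (simp add: power_add)
  moreover have "(\<Sum>v\<in>V. Wt (Suc m) v) \<le> (1 + aa)^(j + k0)"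
  proof -
    have "(\<Sum>v\<in>V. Wt (Suc m) v) \<le> (\<Sum>L\<in>T. wl (fst L) (snd L) * (1 + aa)^k0)"
      unfolding sumW by (rule sum_mono) (use bound wl_nonneg in \<open>simp add: mult_left_mono\<close>)
    also have "\<dots> = (\<Sum>L\<in>T. wl (fst L) (snd L)) * (1 + aa)^k0" by (simp add: sum_distrib_right)
    also have "\<dots> \<le> (1 + aa)^j * (1 + aa)^k0"
      by (rule mult_right_mono[OF j(2)]) (use aa_pos in simp)
    finally show ?thesis by (simp add: power_add)
  qed
  ultimately show ?case by blast
qed


definition tb :: "bool \<Rightarrow> complex" where
  "tb \<beta> = (if \<beta> then Complex (1/2) (1/2) else Complex (sqrt 2 / 2) 0)"

lemma s2: "sqrt 2 * sqrt 2 = (2::real)" by simp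

lemma T_state_01: "T_state 0 = tb False" "T_state 1 = tb True"
proof -
  have "1 / complex_of_real (sqrt 2) = complex_of_real (1 / sqrt 2)" by simp
  also have "1 / sqrt 2 = sqrt 2 / (2::real)" by (simp add: field_simps)
  finally show "T_state 0 = tb False" by (simp add: T_state_def tb_def complex_of_real_def)
  have "cis (pi/4) / complex_of_real (sqrt 2) = Complex (1/2) (1/2)"
    by (simp add: complex_eq_iff cos_45 sin_45 Re_divide_of_real Im_divide_of_real)
  then show "T_state 1 = tb True" by (simp add: T_state_def tb_def)
qed

lemma T_pow_eq: "T_pow m x = (if x < 2^m then \<Prod>i<m. tb (bit x i) else 0)"
proof (induction m arbitrary: x)
  case 0 then show ?case by (simp add: ket0_def)
next
  case (Suc m)
  have xm: "x mod 2^m < 2^m" by simp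
  have p: "(\<Prod>i<m. tb (bit (x mod 2^m) i)) = (\<Prod>i<m. tb (bit x i))"
    by (rule prod.cong) (auto simp: take_bit_eq_mod[symmetric] bit_take_bit_iff)
  have T1: "T_pow (Suc m) x = (\<Prod>i<m. tb (bit x i)) * T_state (x div 2^m)"
    using Suc.IH[of "x mod 2^m"] xm p by simp
  show ?case
  proof (cases "x < 2^Suc m")
    case True
    then have "x div 2^m < 2" by (simp add: less_mult_imp_div_less mult.commute)
    then have "x div 2^m = 0 \<or> x div 2^m = 1" by linarith
    then have "T_state (x div 2^m) = tb (bit x m)"
      using T_state_01 by (auto simp: bit_iff_odd)
    then show ?thesis using T1 True by (simp add: prod.lessThan_Suc)
  next
    case False
    then have "2 \<le> x div 2^m" by (simp add: le_div_geq mult.commute div_le_mono[of "2*2^m" x "2^m", simplified] )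
    then have "T_state (x div 2^m) = 0" by (simp add: T_state_def)
    then show ?thesis using T1 False by simp
  qed
qed

lemma sum_prod_bits2:
  fixes h :: "nat \<Rightarrow> bool \<Rightarrow> bool \<Rightarrow> 'a::comm_semiring_1"
  shows "(\<Sum>r<(2::nat)^m. \<Sum>c<(2::nat)^m. \<Prod>i<m. h i (bit r i) (bit c i))
         = (\<Prod>i<m. (h i False False + h i False True) + (h i True False + h i True True))"
proof -
  have "(\<Sum>r<(2::nat)^m. \<Sum>c<(2::nat)^m. \<Prod>i<m. h i (bit r i) (bit c i))
      = (\<Sum>r<(2::nat)^m. \<Prod>i<m. h i (bit r i) False + h i (bit r i) True)"
    by (rule sum.cong[OF refl]) (rule sum_prod_bits)
  also have "\<dots> = (\<Prod>i<m. (h i False False + h i False True) + (h i True False + h i True True))"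
    by (rule sum_prod_bits)
  finally show ?thesis .
qed

definition q1 :: "bool \<Rightarrow> bool \<Rightarrow> complex" where
  "q1 \<alpha> \<beta> = (let h = (\<lambda>\<rho> \<gamma>. p1 \<alpha> \<beta> \<gamma> \<rho> * tb \<rho> * cnj (tb \<gamma>)) in
      (h False False + h False True) + (h True False + h True True))"

lemma cmod_q1: "cmod (q1 \<alpha> \<beta>) = wl \<alpha> \<beta>"
proof -
  have b: "sqrt (1/2) * 2 = sqrt (2::real)" by (simp add: real_sqrt_divide field_simps)
  show ?thesis
  proof (cases \<alpha>; cases \<beta>)
    assume "\<alpha>" "\<beta>"
    show ?thesis using \<open>\<alpha>\<close> \<open>\<beta>\<close> b by (simp add: q1_def p1_def tb_def wl_def aa_def cmod_def power2_eq_square)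
  next
    assume "\<alpha>" "\<not>\<beta>"
    then show ?thesis using b by (simp add: q1_def p1_def tb_def wl_def aa_def cmod_def power2_eq_square)
  next
    assume "\<not>\<alpha>" "\<beta>"
    then show ?thesis by (simp add: q1_def p1_def tb_def wl_def aa_def cmod_def power2_eq_square)
  next
    assume "\<not>\<alpha>" "\<not>\<beta>"
    then show ?thesis by (simp add: q1_def p1_def tb_def wl_def aa_def cmod_def power2_eq_square)
  qed
qed

lemma Q_eq:
  "(\<Sum>r<(2::nat)^m. \<Sum>c<(2::nat)^m. pauli m v c r * (T_pow m r * cnj (T_pow m c)))
    = (\<Prod>i<m. q1 (bit (fst v) i) (bit (snd v) i))"
proof -
  let ?h = "\<lambda>i \<rho> \<gamma>. p1 (bit (fst v) i) (bit (snd v) i) \<gamma> \<rho> * tb \<rho> * cnj (tb \<gamma>)"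
  have "(\<Sum>r<(2::nat)^m. \<Sum>c<(2::nat)^m. pauli m v c r * (T_pow m r * cnj (T_pow m c)))
      = (\<Sum>r<(2::nat)^m. \<Sum>c<(2::nat)^m. \<Prod>i<m. ?h i (bit r i) (bit c i))"
  proof (intro sum.cong refl)
    fix r c assume "r \<in> {..<(2::nat)^m}" "c \<in> {..<(2::nat)^m}"
    then have rc: "r < 2^m" "c < 2^m" by auto
    have "pauli m v c r * (T_pow m r * cnj (T_pow m c))
        = (\<Prod>i<m. p1 (bit (fst v) i) (bit (snd v) i) (bit c i) (bit r i)) * ((\<Prod>i<m. tb (bit r i)) * (\<Prod>i<m. cnj (tb (bit c i))))"
      using rc by (simp add: pauli_def pk_def pf_def T_pow_eq cnj_prod)
    also have "\<dots> = (\<Prod>i<m. ?h i (bit r i) (bit c i))" by (simp add: prod.distrib mult.assoc)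
    finally show "pauli m v c r * (T_pow m r * cnj (T_pow m c)) = (\<Prod>i<m. ?h i (bit r i) (bit c i))" .
  qed
  also have "\<dots> = (\<Prod>i<m. (?h i False False + ?h i False True) + (?h i True False + ?h i True True))"
    by (rule sum_prod_bits2)
  also have "\<dots> = (\<Prod>i<m. q1 (bit (fst v) i) (bit (snd v) i))"
    by (simp add: q1_def Let_def)
  finally show ?thesis .
qed

lemma overlap:
  assumes st: "\<phi> \<in> stab_states m"
  shows "cmod (inner_q m \<phi> (T_pow m))^2 \<le> ((1 + aa) / 2)^m"
proof -
  obtain V s where V: "V \<subseteq> lab m" "card V = 2^m" "affp V" "\<forall>v\<in>V. cmod (s v) \<le> 1"
    and kv: "kq \<phi> = (\<lambda>r c. (\<Sum>v\<in>V. s v * pauli m v r c) / 2^m)"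
    using stab_inv[OF st] unfolding sinv_def by blast
  let ?\<psi> = "T_pow m"
  define Q where "Q v = (\<Sum>r<(2::nat)^m. \<Sum>c<(2::nat)^m. pauli m v c r * (?\<psi> r * cnj (?\<psi> c)))" for v
  define z where "z = inner_q m \<phi> ?\<psi>"
  have "z * cnj z = (\<Sum>r<(2::nat)^m. \<Sum>c<(2::nat)^m. kq \<phi> c r * (?\<psi> r * cnj (?\<psi> c)))"
    unfolding z_def inner_q_def kq_def by (simp add: sum_product cnj_sum mult_ac) (rule sum.swap)
  also have "\<dots> = (\<Sum>r<(2::nat)^m. \<Sum>c<(2::nat)^m. \<Sum>v\<in>V. s v * (pauli m v c r * (?\<psi> r * cnj (?\<psi> c))) / 2^m)"
    unfolding kv by (intro sum.cong refl) (simp add: sum_distrib_left mult_ac sum_divide_distrib)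
  also have "\<dots> = (\<Sum>v\<in>V. \<Sum>r<(2::nat)^m. \<Sum>c<(2::nat)^m. s v * (pauli m v c r * (?\<psi> r * cnj (?\<psi> c))) / 2^m)"
    by (subst swap3) (rule refl)
  also have "\<dots> = (\<Sum>v\<in>V. s v * Q v) / 2^m"
    by (simp add: Q_def sum_distrib_left sum_divide_distrib)
  finally have zz: "z * cnj z = (\<Sum>v\<in>V. s v * Q v) / 2^m" .
  have "cmod z ^ 2 = cmod (z * cnj z)" by (simp add: norm_mult power2_eq_square)
  also have "\<dots> = cmod (\<Sum>v\<in>V. s v * Q v) / 2^m" by (simp add: zz norm_divide norm_power)
  also have "\<dots> \<le> (\<Sum>v\<in>V. Wt m v) / 2^m"
  proof (rule divide_right_mono)
    have "cmod (\<Sum>v\<in>V. s v * Q v) \<le> (\<Sum>v\<in>V. cmod (s v * Q v))" by (rule norm_sum)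
    also have "\<dots> \<le> (\<Sum>v\<in>V. Wt m v)"
    proof (rule sum_mono)
      fix v assume "v \<in> V"
      have "cmod (Q v) = Wt m v" unfolding Q_def Q_eq by (simp add: prod_norm[symmetric] cmod_q1 Wt_def)
      moreover have "0 \<le> Wt m v" unfolding Wt_def by (rule prod_nonneg) (simp add: wl_nonneg)
      ultimately show "cmod (s v * Q v) \<le> Wt m v" using V(4) \<open>v \<in> V\<close> by (simp add: norm_mult mult_left_le_one_le)
    qed
    finally show "cmod (\<Sum>v\<in>V. s v * Q v) \<le> (\<Sum>v\<in>V. Wt m v)" .
  qed simp
  also have "\<dots> \<le> (1 + aa)^m / 2^m"
  proof -
    have "V \<noteq> {}" using V(2) by auto
    then obtain k where k: "card V = 2^k" "(\<Sum>v\<in>V. Wt m v) \<le> (1 + aa)^k" using weight[OF V(1) V(3)] by blast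
    then have "k = m" using V(2) by simp
    then show ?thesis using k by (simp add: divide_right_mono)
  qed
  also have "\<dots> = ((1 + aa) / 2)^m" by (simp add: power_divide)
  finally show ?thesis unfolding z_def .
qed


definition prodst :: "nat \<Rightarrow> (nat \<Rightarrow> bool \<Rightarrow> complex) \<Rightarrow> qvec" where
  "prodst m g x = (if x < 2^m then \<Prod>i<m. g i (bit x i) else 0)"

lemma prodst_cong: "(\<And>i. i < m \<Longrightarrow> g i = g' i) \<Longrightarrow> prodst m g = prodst m g'"
  unfolding prodst_def by (intro ext) (auto intro!: prod.cong)

lemma ket0_prodst: "ket0 = prodst m (\<lambda>i \<beta>. if \<beta> then 0 else 1)"
proof (intro ext)
  fix x
  show "ket0 x = prodst m (\<lambda>i \<beta>. if \<beta> then 0 else 1) x"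
  proof (cases "x < 2^m")
    case True
    show ?thesis
    proof (cases "x = 0")
      case True then show ?thesis by (simp add: ket0_def prodst_def)
    next
      case False
      then obtain i where "i < m" "bit x i" using zero_bits[of x m] \<open>x < 2^m\<close> by blast
      then have "(\<Prod>i<m. (if bit x i then 0 else 1::complex)) = 0" by (intro prod_zero) auto
      then show ?thesis using False True by (simp add: ket0_def prodst_def)
    qed
  next
    case False
    have "(0::nat) < 2^m" by simp
    then have "x \<noteq> 0" using False by (metis)
    then show ?thesis using False by (simp add: ket0_def prodst_def)
  qed
qed

definition hv :: "(bool \<Rightarrow> complex) \<Rightarrow> bool \<Rightarrow> complex" where
  "hv f \<beta> = (if \<beta> then f False - f True else f False + f True) / complex_of_real (sqrt 2)"

lemma prodst_split: "j < m \<Longrightarrow> x < 2^m \<Longrightarrow> prodst m g x = g j (bit x j) * (\<Prod>i\<in>{..<m}-{j}. g i (bit x i))"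
  unfolding prodst_def by (simp add: prod.remove)

lemma had_prodst: assumes j: "j < m" shows "hadamard j (prodst m g) = prodst m (g(j := hv (g j)))"
proof (intro ext)
  fix x
  show "hadamard j (prodst m g) x = prodst m (g(j := hv (g j))) x"
  proof (cases "x < 2^m")
    case True
    let ?R = "\<Prod>i\<in>{..<m}-{j}. g i (bit x i)"
    have e: "prodst m g (setb j u x) = g j u * ?R" for u
    proof -
      have "prodst m g (setb j u x) = g j u * (\<Prod>i\<in>{..<m}-{j}. g i (bit (setb j u x) i))"
        using prodst_split[OF j] True setb_lt[OF j] by (simp add: bit_setb)
      also have "(\<Prod>i\<in>{..<m}-{j}. g i (bit (setb j u x) i)) = ?R"
        by (rule prod.cong) (auto simp: bit_setb)
      finally show ?thesis .
    qed
    have r: "prodst m (g(j := hv (g j))) x = hv (g j) (bit x j) * ?R"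
      using prodst_split[OF j True, of "g(j := hv (g j))"]
      by (simp add: prod.cong[of "{..<m}-{j}" "{..<m}-{j}" "\<lambda>i. (g(j := hv (g j))) i (bit x i)" "\<lambda>i. g i (bit x i)"])
    show ?thesis unfolding hadamard_eq e r
      by (cases "bit x j") (simp_all add: UNIV_bool hs_def hv_def algebra_simps add_divide_distrib diff_divide_distrib)
  next
    case False
    then show ?thesis using setb_lt[OF j] by (simp add: hadamard_eq prodst_def)
  qed
qed

lemma phs_prodst: assumes j: "j < m" shows "phase_gate j (prodst m g) = prodst m (g(j := (\<lambda>\<beta>. sf \<beta> * g j \<beta>)))"
proof (intro ext)
  fix x
  show "phase_gate j (prodst m g) x = prodst m (g(j := (\<lambda>\<beta>. sf \<beta> * g j \<beta>))) x"
  proof (cases "x < 2^m")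
    case True
    have r: "prodst m (g(j := (\<lambda>\<beta>. sf \<beta> * g j \<beta>))) x = sf (bit x j) * g j (bit x j) * (\<Prod>i\<in>{..<m}-{j}. g i (bit x i))"
      using prodst_split[OF j True, of "g(j := (\<lambda>\<beta>. sf \<beta> * g j \<beta>))"]
      by (simp add: prod.cong[of "{..<m}-{j}" "{..<m}-{j}" "\<lambda>i. (g(j := (\<lambda>\<beta>. sf \<beta> * g j \<beta>))) i (bit x i)" "\<lambda>i. g i (bit x i)"])
    show ?thesis using prodst_split[OF j True, of g] unfolding r
      by (simp add: phase_gate_def sf_def)
  next
    case False
    then show ?thesis by (simp add: phase_gate_def prodst_def)
  qed
qed


definition tF :: complex where "tF = tb False"
definition z0 :: "bool \<Rightarrow> complex" where "z0 \<beta> = (if \<beta> then 0 else 1)"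

lemma inv_sqrt2: "1 / complex_of_real (sqrt 2) = tF"
  using T_state_01(1) by (simp add: T_state_def tF_def)

lemma hv_z0: "hv z0 = (\<lambda>_. tF)"
  by (intro ext) (simp add: hv_def z0_def inv_sqrt2)

lemma plus_stab: "k \<le> m \<Longrightarrow> prodst m (\<lambda>i. if i < k then (\<lambda>_. tF) else z0) \<in> stab_states m"
proof (induction k)
  case 0
  have "prodst m (\<lambda>i. if i < 0 then (\<lambda>_. tF) else z0) = ket0"
    unfolding ket0_prodst[of m] by (rule prodst_cong) (auto simp: z0_def)
  then show ?case by (simp add: stab_states.base)
next
  case (Suc k)
  then have km: "k < m" by simp
  have "hadamard k (prodst m (\<lambda>i. if i < k then (\<lambda>_. tF) else z0)) \<in> stab_states m"
    using Suc km by (intro stab_states.had) auto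
  also have "hadamard k (prodst m (\<lambda>i. if i < k then (\<lambda>_. tF) else z0)) = prodst m (\<lambda>i. if i < Suc k then (\<lambda>_. tF) else z0)"
    unfolding had_prodst[OF km] by (rule prodst_cong) (auto simp: hv_z0)
  finally show ?case .
qed

definition pI :: "bool \<Rightarrow> complex" where "pI \<beta> = sf \<beta> * tF"

lemma mixed_stab: "k \<le> m \<Longrightarrow> prodst m (\<lambda>i. if i < k \<and> bit s i then pI else (\<lambda>_. tF)) \<in> stab_states m"
proof (induction k)
  case 0
  have "prodst m (\<lambda>i. if i < 0 \<and> bit s i then pI else (\<lambda>_. tF)) = prodst m (\<lambda>i. if i < m then (\<lambda>_. tF) else z0)"
    by (rule prodst_cong) auto
  then show ?case using plus_stab[of m m] by simp
next
  case (Suc k)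
  then have km: "k < m" and IH: "prodst m (\<lambda>i. if i < k \<and> bit s i then pI else (\<lambda>_. tF)) \<in> stab_states m" by auto
  show ?case
  proof (cases "bit s k")
    case True
    have "phase_gate k (prodst m (\<lambda>i. if i < k \<and> bit s i then pI else (\<lambda>_. tF))) \<in> stab_states m"
      using IH km by (intro stab_states.phs)
    also have "phase_gate k (prodst m (\<lambda>i. if i < k \<and> bit s i then pI else (\<lambda>_. tF))) = prodst m (\<lambda>i. if i < Suc k \<and> bit s i then pI else (\<lambda>_. tF))"
      unfolding phs_prodst[OF km] by (rule prodst_cong) (auto simp: pI_def True)
    finally show ?thesis .
  next
    case False
    have "prodst m (\<lambda>i. if i < Suc k \<and> bit s i then pI else (\<lambda>_. tF)) = prodst m (\<lambda>i. if i < k \<and> bit s i then pI else (\<lambda>_. tF))"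
      by (rule prodst_cong) (use False in \<open>auto simp: less_Suc_eq\<close>)
    then show ?thesis using IH by simp
  qed
qed

lemma phi_stab: "prodst m (\<lambda>i. if bit s i then pI else (\<lambda>_. tF)) \<in> stab_states m"
proof -
  have "prodst m (\<lambda>i. if bit s i then pI else (\<lambda>_. tF)) = prodst m (\<lambda>i. if i < m \<and> bit s i then pI else (\<lambda>_. tF))"
    by (rule prodst_cong) auto
  then show ?thesis using mixed_stab[of m m s] by simp
qed

lemma aa_sq: "aa * aa = 1/2" by (simp add: aa_def)

lemma cos8: "cos (pi/8) ^ 2 = (1 + aa) / 2"
proof -
  have "cos (2 * (pi/8)) = 2 * cos (pi/8) ^ 2 - 1" by (rule cos_double_cos)
  moreover have "2 * (pi/8) = pi/4" by simp
  ultimately have "cos (pi/4) = 2 * cos (pi/8) ^ 2 - 1" by simp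
  then have "sqrt 2 / 2 = 2 * cos (pi/8) ^ 2 - 1" by (simp add: cos_45)
  then show ?thesis unfolding aa_def by (simp add: field_simps)
qed

lemma cos8_pos: "0 < cos (pi/8)" by (rule cos_gt_zero) (simp_all add: pi_gt_zero)

lemma cos_pow: "cos (pi/8) ^ (2*m) = ((1 + aa) / 2)^m"
  by (simp add: power_mult cos8)

lemma plus_overlap: "cmod (inner_q m (prodst m (\<lambda>i. \<lambda>_. tF)) (T_pow m))^2 = ((1 + aa) / 2)^m"
proof -
  have "inner_q m (prodst m (\<lambda>i. \<lambda>_. tF)) (T_pow m) = (\<Sum>x<(2::nat)^m. \<Prod>i<m. cnj tF * tb (bit x i))"
    unfolding inner_q_def by (intro sum.cong refl) (simp add: prodst_def T_pow_eq prod.distrib)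
  also have "\<dots> = (\<Prod>i<m. cnj tF * tb False + cnj tF * tb True)" by (rule sum_prod_bits)
  also have "\<dots> = (cnj tF * tb False + cnj tF * tb True)^m" by simp
  finally have e: "inner_q m (prodst m (\<lambda>i. \<lambda>_. tF)) (T_pow m) = (cnj tF * tb False + cnj tF * tb True)^m" .
  have c: "cmod (cnj tF * tb False + cnj tF * tb True) ^ 2 = (1 + aa) / 2"
  proof -
    have "cnj tF * tb False + cnj tF * tb True = Complex (1/2 + aa/2) (aa/2)"
      by (simp add: tF_def tb_def complex_eq_iff aa_def)
    then have "cmod (cnj tF * tb False + cnj tF * tb True) ^ 2 = (1/2 + aa/2)^2 + (aa/2)^2"
      by (simp add: cmod_def)
    also have "\<dots> = (1 + aa) / 2" by (simp add: power2_eq_square algebra_simps aa_sq)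
    finally show ?thesis .
  qed
  have "(cmod (cnj tF * tb False + cnj tF * tb True) ^ m)^2 = (cmod (cnj tF * tb False + cnj tF * tb True) ^ 2)^m"
    by (simp add: power_mult[symmetric] mult.commute)
  also have "\<dots> = ((1 + aa) / 2)^m" unfolding c ..
  finally show ?thesis unfolding e norm_power .
qed


lemma T_norm: "inner_q m (T_pow m) (T_pow m) = 1"
proof -
  have "inner_q m (T_pow m) (T_pow m) = (\<Sum>x<(2::nat)^m. \<Prod>i<m. cnj (tb (bit x i)) * tb (bit x i))"
    unfolding inner_q_def by (intro sum.cong refl) (simp add: T_pow_eq prod.distrib cnj_prod)
  also have "\<dots> = (\<Prod>i<m. cnj (tb False) * tb False + cnj (tb True) * tb True)" by (rule sum_prod_bits)
  also have "cnj (tb False) * tb False + cnj (tb True) * tb True = 1"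
    by (simp add: tb_def complex_eq_iff power2_eq_square)
  finally show ?thesis by simp
qed

lemma inner_cnj: "inner_q m \<psi> \<phi> = cnj (inner_q m \<phi> \<psi>)"
  by (simp add: inner_q_def cnj_sum mult.commute)

lemma overlap_le: "\<phi> \<in> stab_states m \<Longrightarrow> cmod (inner_q m \<phi> (T_pow m)) \<le> cos (pi/8) ^ m"
proof -
  assume st: "\<phi> \<in> stab_states m"
  have "cmod (inner_q m \<phi> (T_pow m))^2 \<le> (cos (pi/8) ^ m)^2"
    using overlap[OF st] cos_pow[of m] by (simp add: power_mult[symmetric] mult.commute)
  then show ?thesis by (rule power2_le_imp_le) (use cos8_pos in simp)
qed

lemma extent_lower:
  assumes st: "\<forall>i<n. phi i \<in> stab_states m" and dec: "T_pow m = (\<lambda>x. \<Sum>i<n. c i * phi i x)"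
  shows "1 / cos (pi/8) ^ (2*m) \<le> (\<Sum>i<n. cmod (c i))^2"
proof -
  let ?C = "cos (pi/8) ^ m"
  have Cp: "0 < ?C" using cos8_pos by simp
  have "1 = inner_q m (T_pow m) (T_pow m)" by (simp add: T_norm)
  have dx: "\<And>x. T_pow m x = (\<Sum>i<n. c i * phi i x)" using dec by metis
  have "inner_q m (T_pow m) (T_pow m) = (\<Sum>x<(2::nat)^m. cnj (T_pow m x) * (\<Sum>i<n. c i * phi i x))"
    unfolding inner_q_def by (intro sum.cong refl arg_cong2[where f="(*)"] dx)
  also have "\<dots> = (\<Sum>i<n. c i * inner_q m (T_pow m) (phi i))"
    unfolding inner_q_def by (simp add: sum_distrib_left mult_ac) (rule sum.swap)
  finally have one: "1 = (\<Sum>i<n. c i * inner_q m (T_pow m) (phi i))" using \<open>1 = inner_q m (T_pow m) (T_pow m)\<close> by simp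
  have "1 \<le> (\<Sum>i<n. cmod (c i) * ?C)"
  proof -
    have "1 = cmod (\<Sum>i<n. c i * inner_q m (T_pow m) (phi i))" using one by (metis norm_one)
    also have "\<dots> \<le> (\<Sum>i<n. cmod (c i * inner_q m (T_pow m) (phi i)))" by (rule norm_sum)
    also have "\<dots> \<le> (\<Sum>i<n. cmod (c i) * ?C)"
    proof (rule sum_mono)
      fix i assume "i \<in> {..<n}"
      then have "cmod (inner_q m (T_pow m) (phi i)) \<le> ?C"
        using overlap_le[of "phi i" m] st by (simp add: inner_cnj[of m "T_pow m"])
      then show "cmod (c i * inner_q m (T_pow m) (phi i)) \<le> cmod (c i) * ?C"
        by (simp add: norm_mult mult_left_mono)
    qed
    finally show ?thesis .
  qed
  then have "1 \<le> (\<Sum>i<n. cmod (c i)) * ?C" by (simp add: sum_distrib_right)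
  then have "1 / ?C \<le> (\<Sum>i<n. cmod (c i))" using Cp by (simp add: divide_le_eq)
  moreover have "0 \<le> 1 / ?C" using Cp by simp
  ultimately have "(1 / ?C)^2 \<le> (\<Sum>i<n. cmod (c i))^2" by (rule power_mono)
  then show ?thesis by (simp add: power_divide power_mult[symmetric] mult.commute)
qed

definition r0 :: real where "r0 = (1 - 2 * aa) / 2"
definition al0 :: complex where "al0 = Complex (1/2) (- r0)"
definition be0 :: complex where "be0 = Complex (1/2) r0"

lemma qubit_dec: "al0 * tF + be0 * pI \<rho> = tb \<rho>"
proof -
  have "sqrt 2 * sqrt 2 = (2::real)" by simp
  show ?thesis
  proof (cases \<rho>)
    case True
    have "sqrt 2 = 2 + (sqrt 2 * 4 - 8) / (4::real)" by (simp add: field_simps)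
    then show ?thesis using True by (simp add: al0_def be0_def tF_def pI_def sf_def tb_def r0_def aa_def complex_eq_iff algebra_simps)
  next
    case False
    then show ?thesis by (simp add: al0_def be0_def tF_def pI_def sf_def tb_def r0_def aa_def complex_eq_iff algebra_simps)
  qed
qed

definition cf :: "nat \<Rightarrow> nat \<Rightarrow> complex" where "cf m s = (\<Prod>i<m. if bit s i then be0 else al0)"
definition phis :: "nat \<Rightarrow> nat \<Rightarrow> qvec" where "phis m s = prodst m (\<lambda>i. if bit s i then pI else (\<lambda>_. tF))"

lemma T_dec: "T_pow m = (\<lambda>x. \<Sum>s<2^m. cf m s * phis m s x)"
proof (intro ext)
  fix x
  show "T_pow m x = (\<Sum>s<2^m. cf m s * phis m s x)"
  proof (cases "x < 2^m")
    case True
    have "(\<Sum>s<(2::nat)^m. cf m s * phis m s x) = (\<Sum>s<(2::nat)^m. \<Prod>i<m. (if bit s i then be0 * pI (bit x i) else al0 * tF))"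
    proof (intro sum.cong refl)
      fix s
      have "cf m s * phis m s x = (\<Prod>i<m. (if bit s i then be0 else al0) * (if bit s i then pI else (\<lambda>_. tF)) (bit x i))"
        using True by (simp add: cf_def phis_def prodst_def prod.distrib)
      also have "\<dots> = (\<Prod>i<m. (if bit s i then be0 * pI (bit x i) else al0 * tF))"
        by (intro prod.cong refl) auto
      finally show "cf m s * phis m s x = (\<Prod>i<m. (if bit s i then be0 * pI (bit x i) else al0 * tF))" .
    qed
    also have "\<dots> = (\<Prod>i<m. al0 * tF + be0 * pI (bit x i))"
      using sum_prod_bits[of "\<lambda>i \<sigma>. if \<sigma> then be0 * pI (bit x i) else al0 * tF" m] by simp
    also have "\<dots> = T_pow m x" using True by (simp add: qubit_dec T_pow_eq)
    finally show ?thesis ..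
  next
    case False
    then show ?thesis by (simp add: T_pow_eq phis_def prodst_def)
  qed
qed

lemma cf_sum: "(\<Sum>s<(2::nat)^m. cmod (cf m s))^2 = 1 / cos (pi/8) ^ (2*m)"
proof -
  define q where "q = cmod al0"
  have qb: "cmod be0 = q" by (simp add: q_def al0_def be0_def cmod_def)
  have qa: "cmod al0 = q" by (simp add: q_def)
  have "(\<Sum>s<(2::nat)^m. cmod (cf m s)) = (\<Sum>s<(2::nat)^m. \<Prod>i<m. (\<lambda>i \<sigma>. q) i (bit s i))"
  proof (intro sum.cong refl)
    fix s
    have "cmod (cf m s) = (\<Prod>i<m. cmod (if bit s i then be0 else al0))" by (simp add: cf_def prod_norm)
    also have "\<dots> = (\<Prod>i<m. (\<lambda>i \<sigma>. q) i (bit s i))" by (intro prod.cong refl) (simp add: qa qb)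
    finally show "cmod (cf m s) = (\<Prod>i<m. (\<lambda>i \<sigma>. q) i (bit s i))" .
  qed
  also have "\<dots> = (\<Prod>i<m. q + q)" by (rule sum_prod_bits)
  finally have e: "(\<Sum>s<(2::nat)^m. cmod (cf m s)) = (2 * q)^m" by simp
  have q2: "(2 * q)^2 = 2 / (1 + aa)"
  proof -
    have "(2 * q)^2 = 4 * (1/4 + r0^2)" by (simp add: q_def al0_def cmod_def power_mult_distrib power2_eq_square)
    also have "\<dots> = 4 - 4 * aa"
    proof -
      have "(1 - 2*aa)^2 = 1 - 4*aa + 4*(aa*aa)" by (simp add: power2_eq_square algebra_simps)
      then have "(1 - 2*aa)^2 = 3 - 4*aa" using aa_sq by simp
      then show ?thesis by (simp add: r0_def power_divide)
    qed
    also have "\<dots> = 2 / (1 + aa)" using aa_pos aa_sq by (simp add: field_simps)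
    finally show ?thesis .
  qed
  have "(\<Sum>s<(2::nat)^m. cmod (cf m s))^2 = ((2 * q)^2)^m" unfolding e power_mult[symmetric] by (simp add: mult.commute)
  also have "\<dots> = (2 / (1 + aa))^m" by (simp only: q2)
  also have "\<dots> = 1 / ((1 + aa) / 2)^m" by (simp add: power_divide)
  also have "\<dots> = 1 / cos (pi/8) ^ (2*m)" by (simp add: cos_pow)
  finally show ?thesis .
qed

theorem factB3:
  fixes m :: nat
  assumes "m \<ge> 1"
  shows "stab_extent m (T_pow m) = 1 / (cos (pi/8)) ^ (2*m)
       \<and> stab_fidelity m (T_pow m) = (cos (pi/8)) ^ (2*m)"
proof
  show "stab_extent m (T_pow m) = 1 / (cos (pi/8)) ^ (2*m)"
    unfolding stab_extent_def
  proof (rule cInf_eq_minimum)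
    show "1 / cos (pi / 8) ^ (2 * m) \<in> {(\<Sum>i<n. cmod (c i))\<^sup>2 |(n::nat) (c::nat \<Rightarrow> complex) (phi::nat \<Rightarrow> qvec). (\<forall>i<n. phi i \<in> stab_states m) \<and> T_pow m = (\<lambda>x. \<Sum>i<n. c i * phi i x)}"
    proof -
      have m1: "\<forall>i<2^m. phis m i \<in> stab_states m" using phi_stab[of m] unfolding phis_def by blast
      have mem: "(\<forall>i<2^m. phis m i \<in> stab_states m) \<and> T_pow m = (\<lambda>x. \<Sum>i<2^m. cf m i * phis m i x)"
        using T_dec[of m] m1 by blast
      have H: "1 / cos (pi / 8) ^ (2 * m) = (\<Sum>i<(2::nat)^m. cmod (cf m i))\<^sup>2 \<and> (\<forall>i<(2::nat)^m. phis m i \<in> stab_states m) \<and> T_pow m = (\<lambda>x. \<Sum>i<(2::nat)^m. cf m i * phis m i x)"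
        using mem cf_sum[of m] by simp
      show ?thesis unfolding mem_Collect_eq
        by (intro exI) (rule H)
    qed
  next
    fix x assume "x \<in> {(\<Sum>i<n. cmod (c i))\<^sup>2 |(n::nat) (c::nat \<Rightarrow> complex) (phi::nat \<Rightarrow> qvec). (\<forall>i<n. phi i \<in> stab_states m) \<and> T_pow m = (\<lambda>x. \<Sum>i<n. c i * phi i x)}"
    then show "1 / cos (pi / 8) ^ (2 * m) \<le> x" using extent_lower by blast
  qed
  show "stab_fidelity m (T_pow m) = (cos (pi/8)) ^ (2*m)"
    unfolding stab_fidelity_def
  proof (rule cSup_eq_maximum)
    have "prodst m (\<lambda>i. \<lambda>_. tF) = prodst m (\<lambda>i. if i < m then (\<lambda>_. tF) else z0)"
      by (rule prodst_cong) auto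
    then have "prodst m (\<lambda>i. \<lambda>_. tF) \<in> stab_states m" using plus_stab[of m m] by simp
    then show "cos (pi / 8) ^ (2 * m) \<in> {(cmod (inner_q m phi (T_pow m)))\<^sup>2 |phi. phi \<in> stab_states m}"
    proof -
      have e: "cos (pi/8)^(2*m) = (cmod (inner_q m (prodst m (\<lambda>i _. tF)) (T_pow m)))^2"
        using plus_overlap[of m] cos_pow[of m] by simp
      show ?thesis unfolding mem_Collect_eq by (intro exI) (rule conjI[OF e \<open>prodst m (\<lambda>i _. tF) \<in> stab_states m\<close>])
    qed
  next
    fix x assume "x \<in> {(cmod (inner_q m phi (T_pow m)))\<^sup>2 |phi. phi \<in> stab_states m}"
    then show "x \<le> cos (pi / 8) ^ (2 * m)" using overlap cos_pow by auto
  qed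
qed


end
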